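(* Let $G$ be a finite graph, let $t\ge 0$ be an integer, and let $H$ be a nonempty $t$-minor of $G$. Then $$\frac{\beta(H)}{\alpha(H)}\le \hat\beta_t(G),$$ where $\alpha(H)$ is the size of a largest independent set in $H$.
   Context: All graphs are finite and simple. For an integer $t\ge 0$, a graph $H$ is a $t$-shallow minor ($t$-minor) of a graph $G$ if there are pairwise disjoint sets $V_v\subseteq V(G)$, $v\in V(H)$, each inducing a connected subgraph of $G$ of radius at most $t$, such that $uv\in E(H)$ if and only if some edge of $G$ joins $V_u$ and $V_v$. For a graph $H$, $\beta(H)$ is the minimum number of cliques partitioning $V(H)$; for $x\in V(H)$, $H_x$ is the subgraph induced by the closed neighborhood $N_H[x]$; $\tilde\beta(H)=\min_{x\in V(H)}\beta(H_x)$; and $\hat\beta_t(G)=\max\{\tilde\beta(H): H \text{ a nonempty } t\text{-minor of } G\}$. *)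

theory Defs
  imports Complex_Main "HOL-Library.Disjoint_Sets"
begin

type_synonym 'a graph = "'a set \<times> ('a \<Rightarrow> 'a \<Rightarrow> bool)"

definition verts :: "'a graph \<Rightarrow> 'a set" where "verts G = fst G"
definition adj :: "'a graph \<Rightarrow> 'a \<Rightarrow> 'a \<Rightarrow> bool" where "adj G = snd G"

definition fin_simple_graph :: "'a graph \<Rightarrow> bool" where
  "fin_simple_graph G \<longleftrightarrow> finite (verts G)
     \<and> (\<forall>u v. adj G u v \<longrightarrow> u \<in> verts G \<and> v \<in> verts G)
     \<and> (\<forall>u v. adj G u v \<longrightarrow> adj G v u)
     \<and> (\<forall>u. \<not> adj G u u)"

definition induced :: "'a graph \<Rightarrow> 'a set \<Rightarrow> 'a graph" where
  "induced G S = (S \<inter> verts G, \<lambda>u v. adj G u v \<and> u \<in> S \<and> v \<in> S)"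

text \<open>G[S] is connected of radius at most t: some centre c in S reaches every
  vertex of S by a path inside S with at most t edges.\<close>
definition radius_le :: "'a graph \<Rightarrow> 'a set \<Rightarrow> nat \<Rightarrow> bool" where
  "radius_le G S t \<longleftrightarrow> (\<exists>c\<in>S. \<forall>v\<in>S. \<exists>p. p \<noteq> [] \<and> hd p = c \<and> last p = v
      \<and> set p \<subseteq> S \<and> length p \<le> t + 1
      \<and> (\<forall>i. i + 1 < length p \<longrightarrow> adj G (p ! i) (p ! (i + 1))))"

definition shallow_minor :: "nat \<Rightarrow> 'a graph \<Rightarrow> 'b graph \<Rightarrow> bool" where
  "shallow_minor t G H \<longleftrightarrow> fin_simple_graph H \<and>
     (\<exists>B :: 'b \<Rightarrow> 'a set.
        (\<forall>v\<in>verts H. B v \<subseteq> verts G \<and> radius_le G (B v) t)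
      \<and> (\<forall>u\<in>verts H. \<forall>v\<in>verts H. u \<noteq> v \<longrightarrow> B u \<inter> B v = {})
      \<and> (\<forall>u\<in>verts H. \<forall>v\<in>verts H. u \<noteq> v \<longrightarrow>
           (adj H u v \<longleftrightarrow> (\<exists>a\<in>B u. \<exists>b\<in>B v. adj G a b))))"

definition is_clique :: "'a graph \<Rightarrow> 'a set \<Rightarrow> bool" where
  "is_clique G C \<longleftrightarrow> C \<subseteq> verts G \<and> (\<forall>u\<in>C. \<forall>v\<in>C. u \<noteq> v \<longrightarrow> adj G u v)"

definition is_indep :: "'a graph \<Rightarrow> 'a set \<Rightarrow> bool" where
  "is_indep G I \<longleftrightarrow> I \<subseteq> verts G \<and> (\<forall>u\<in>I. \<forall>v\<in>I. \<not> adj G u v)"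

definition clique_cover_number :: "'a graph \<Rightarrow> nat" where
  "clique_cover_number G =
     Min {card P | P. partition_on (verts G) P \<and> (\<forall>C\<in>P. is_clique G C)}"

definition indep_number :: "'a graph \<Rightarrow> nat" where
  "indep_number G = Max {card I | I. is_indep G I}"

definition closed_nbhd :: "'a graph \<Rightarrow> 'a \<Rightarrow> 'a set" where
  "closed_nbhd G x = insert x {y \<in> verts G. adj G x y}"

definition local_beta :: "'a graph \<Rightarrow> nat" where
  "local_beta H = Min ((\<lambda>x. clique_cover_number (induced H (closed_nbhd H x))) ` verts H)"

text \<open>hat beta_t(G): max of tilde beta over nonempty t-minors of G.  Minors are
  taken with vertices in nat; every finite graph has an isomorphic copy on nat.\<close>
definition hat_beta :: "nat \<Rightarrow> 'a graph \<Rightarrow> nat" where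
  "hat_beta t G = Max {local_beta H | H :: nat graph. shallow_minor t G H \<and> verts H \<noteq> {}}"

end

theory Submission
  imports Defs
begin

lemma verts_pair[simp]: "verts (A, R) = A" by (simp add: verts_def)
lemma adj_pair[simp]: "adj (A, R) = R" by (simp add: adj_def)
lemma verts_induced[simp]: "verts (induced G S) = S \<inter> verts G"
  by (simp add: induced_def)
lemma adj_induced[simp]: "adj (induced G S) u v = (adj G u v \<and> u \<in> S \<and> v \<in> S)"
  by (simp add: induced_def)

lemma ccn_basic:
  assumes fin: "finite (verts X)"
  shows "\<exists>P. partition_on (verts X) P \<and> (\<forall>C\<in>P. is_clique X C) \<and> card P = clique_cover_number X"
    and "\<And>P. partition_on (verts X) P \<Longrightarrow> (\<forall>C\<in>P. is_clique X C) \<Longrightarrow> clique_cover_number X \<le> card P"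
    and "clique_cover_number X \<le> card (verts X)"
proof -
  let ?Q = "{card P | P. partition_on (verts X) P \<and> (\<forall>C\<in>P. is_clique X C)}"
  have finQ: "finite ?Q"
  proof (rule finite_subset)
    show "?Q \<subseteq> card ` {P. partition_on (verts X) P}" by blast
    show "finite (card ` {P. partition_on (verts X) P})"
      using finitely_many_partition_on[OF fin] by simp
  qed
  have sing: "partition_on (verts X) ((\<lambda>x. {x}) ` verts X) \<and> (\<forall>C\<in>(\<lambda>x. {x}) ` verts X. is_clique X C)"
    by (auto simp: partition_on_singletons is_clique_def)
  have cs: "card ((\<lambda>x. {x}) ` verts X) = card (verts X)"
    by (rule card_image) (auto simp: inj_on_def)
  have mem: "card (verts X) \<in> ?Q"
    by (rule CollectI, rule exI[of _ "(\<lambda>x. {x}) ` verts X"]) (use sing cs in simp)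
  hence ne: "?Q \<noteq> {}" by blast
  have "clique_cover_number X \<in> ?Q" unfolding clique_cover_number_def using Min_in[OF finQ ne] .
  thus "\<exists>P. partition_on (verts X) P \<and> (\<forall>C\<in>P. is_clique X C) \<and> card P = clique_cover_number X"
    by auto
  show "\<And>P. partition_on (verts X) P \<Longrightarrow> (\<forall>C\<in>P. is_clique X C) \<Longrightarrow> clique_cover_number X \<le> card P"
    unfolding clique_cover_number_def by (rule Min_le[OF finQ], rule CollectI, blast)
  show "clique_cover_number X \<le> card (verts X)"
    unfolding clique_cover_number_def by (rule Min_le[OF finQ mem])
qed

lemma radius_ne: "radius_le G S t \<Longrightarrow> S \<noteq> {}"
  unfolding radius_le_def by auto

lemma minor_card:
  assumes "fin_simple_graph G" "shallow_minor t G H"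
  shows "card (verts H) \<le> card (verts G)"
proof -
  obtain B where B: "\<forall>v\<in>verts H. B v \<subseteq> verts G \<and> radius_le G (B v) t"
    "\<forall>u\<in>verts H. \<forall>v\<in>verts H. u \<noteq> v \<longrightarrow> B u \<inter> B v = {}"
    using assms(2) unfolding shallow_minor_def by metis
  have ne: "\<And>v. v \<in> verts H \<Longrightarrow> B v \<noteq> {}" using B(1) radius_ne by blast
  define c where "c v = (SOME a. a \<in> B v)" for v
  have cB: "\<And>v. v \<in> verts H \<Longrightarrow> c v \<in> B v" unfolding c_def using ne by (simp add: some_in_eq)
  have "inj_on c (verts H)"
  proof (rule inj_onI)
    fix x y assume xy: "x \<in> verts H" "y \<in> verts H" "c x = c y"
    show "x = y"
    proof (rule ccontr)
      assume "x \<noteq> y"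
      hence "B x \<inter> B y = {}" using B(2) xy by blast
      moreover have "c x \<in> B x" using cB xy(1) by blast
      moreover have "c x \<in> B y" using cB[OF xy(2)] xy(3) by simp
      ultimately show False by blast
    qed
  qed
  moreover have "c ` verts H \<subseteq> verts G" using cB B(1) by blast
  moreover have "finite (verts G)" using assms(1) by (simp add: fin_simple_graph_def)
  ultimately show ?thesis using card_inj_on_le by blast
qed

lemma local_beta_le:
  assumes "finite (verts H)" "verts H \<noteq> {}"
  shows "local_beta H \<le> card (verts H)"
proof -
  obtain x where x: "x \<in> verts H" using assms(2) by blast
  have "local_beta H \<le> clique_cover_number (induced H (closed_nbhd H x))"
    unfolding local_beta_def using assms(1) x by (intro Min_le) auto
  also have "\<dots> \<le> card (verts (induced H (closed_nbhd H x)))"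
    by (rule ccn_basic(3)) (use assms(1) in simp)
  also have "\<dots> \<le> card (verts H)" using assms(1) by (simp add: card_mono)
  finally show ?thesis .
qed

lemma hat_beta_ge:
  assumes "fin_simple_graph G" "shallow_minor t G (Hn :: nat graph)" "verts Hn \<noteq> {}"
  shows "local_beta Hn \<le> hat_beta t G"
proof -
  let ?Q = "{local_beta H | H :: nat graph. shallow_minor t G H \<and> verts H \<noteq> {}}"
  have "?Q \<subseteq> {..card (verts G)}"
  proof
    fix k assume "k \<in> ?Q"
    then obtain H :: "nat graph" where H: "k = local_beta H" "shallow_minor t G H" "verts H \<noteq> {}" by blast
    have "finite (verts H)" using H(2) by (simp add: shallow_minor_def fin_simple_graph_def)
    hence "k \<le> card (verts H)" using H local_beta_le by metis
    also have "\<dots> \<le> card (verts G)" using minor_card[OF assms(1) H(2)] .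
    finally show "k \<in> {..card (verts G)}" by simp
  qed
  hence "finite ?Q" using finite_subset by blast
  thus ?thesis unfolding hat_beta_def by (rule Max_ge) (use assms in blast)
qed


lemma local_step:
  assumes G: "fin_simple_graph G" and M: "shallow_minor t G H"
    and S: "S \<subseteq> verts H" "S \<noteq> {}"
  shows "\<exists>x\<in>S. \<exists>P. partition_on (closed_nbhd H x \<inter> S) P \<and> (\<forall>C\<in>P. is_clique H C)
           \<and> card P \<le> hat_beta t G"
proof -
  have HG: "fin_simple_graph H" using M by (simp add: shallow_minor_def)
  obtain B where B: "\<forall>v\<in>verts H. B v \<subseteq> verts G \<and> radius_le G (B v) t"
    "\<forall>u\<in>verts H. \<forall>v\<in>verts H. u \<noteq> v \<longrightarrow> B u \<inter> B v = {}"
    "\<forall>u\<in>verts H. \<forall>v\<in>verts H. u \<noteq> v \<longrightarrow> (adj H u v \<longleftrightarrow> (\<exists>a\<in>B u. \<exists>b\<in>B v. adj G a b))"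
    using M unfolding shallow_minor_def by (elim conjE exE) (rule that)
  have finH: "finite (verts H)" using HG by (simp add: fin_simple_graph_def)
  have finS: "finite S" using S(1) finH finite_subset by blast
  obtain f :: "'b \<Rightarrow> nat" and n where f: "f ` S = {i. i < n}" "inj_on f S"
    using finite_imp_inj_to_nat_seg[OF finS] by blast
  define g where "g = inv_into S f"
  have gS: "\<And>u. u \<in> f ` S \<Longrightarrow> g u \<in> S" unfolding g_def by (simp add: inv_into_into)
  have fg: "\<And>u. u \<in> f ` S \<Longrightarrow> f (g u) = u" unfolding g_def by (simp add: f_inv_into_f)
  have gf: "\<And>x. x \<in> S \<Longrightarrow> g (f x) = x" unfolding g_def using f(2) by simp
  define Hn :: "nat graph" where
    "Hn = (f ` S, \<lambda>u v. u \<in> f ` S \<and> v \<in> f ` S \<and> adj H (g u) (g v))"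
  have vHn: "verts Hn = f ` S" unfolding Hn_def by simp
  have aHn: "\<And>u v. adj Hn u v = (u \<in> f ` S \<and> v \<in> f ` S \<and> adj H (g u) (g v))"
    unfolding Hn_def by simp
  have fsg: "fin_simple_graph Hn"
    using HG finS unfolding fin_simple_graph_def vHn aHn by auto
  have "shallow_minor t G Hn"
    unfolding shallow_minor_def
  proof (intro conjI exI[of _ "\<lambda>v. B (g v)"] ballI impI)
    show "fin_simple_graph Hn" by (rule fsg)
  next
    fix v assume "v \<in> verts Hn"
    hence "g v \<in> verts H" using gS S(1) vHn by auto
    thus "B (g v) \<subseteq> verts G" "radius_le G (B (g v)) t" using B(1) by auto
  next
    fix u v assume uv: "u \<in> verts Hn" "v \<in> verts Hn" "u \<noteq> v"
    hence guv: "g u \<in> verts H" "g v \<in> verts H" "g u \<noteq> g v" using gS S(1) vHn fg by (auto, metis)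
    show "B (g u) \<inter> B (g v) = {}" using B(2) guv by blast
    show "adj Hn u v = (\<exists>a\<in>B (g u). \<exists>b\<in>B (g v). adj G a b)"
      using B(3) guv uv(1,2) unfolding aHn vHn by blast
  qed
  moreover have neHn: "verts Hn \<noteq> {}" using S(2) vHn by auto
  ultimately have lb: "local_beta Hn \<le> hat_beta t G" using hat_beta_ge G by blast
  have finHn: "finite (verts Hn)" using finS vHn by simp
  let ?F = "\<lambda>y. clique_cover_number (induced Hn (closed_nbhd Hn y))"
  have "local_beta Hn \<in> ?F ` verts Hn"
    unfolding local_beta_def using finHn neHn by (intro Min_in) auto
  then obtain y where y: "y \<in> f ` S" "local_beta Hn = ?F y" using vHn by auto
  define X where "X = induced Hn (closed_nbhd Hn y)"
  have finX: "finite (verts X)" unfolding X_def using finHn by simp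
  obtain Pn where Pn: "partition_on (verts X) Pn" "\<forall>C\<in>Pn. is_clique X C" "card Pn = ?F y"
    using ccn_basic(1)[OF finX] unfolding X_def by blast
  define x where "x = g y"
  have xS: "x \<in> S" unfolding x_def using gS y(1) by blast
  have vX: "verts X = insert y {z \<in> f ` S. adj H x (g z)}"
    unfolding X_def x_def using y(1) by (auto simp: closed_nbhd_def vHn aHn)
  have vXsub: "verts X \<subseteq> f ` S" using vX y(1) by auto
  have ginj: "inj_on g (verts X)" unfolding g_def by (rule inj_on_inv_into[OF vXsub])
  have gX: "g ` verts X = closed_nbhd H x \<inter> S"
  proof
    show "g ` verts X \<subseteq> closed_nbhd H x \<inter> S"
      using vX gS xS S(1) unfolding x_def closed_nbhd_def by auto
  next
    show "closed_nbhd H x \<inter> S \<subseteq> g ` verts X"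
    proof
      fix w assume w: "w \<in> closed_nbhd H x \<inter> S"
      show "w \<in> g ` verts X"
      proof (cases "w = x")
        case True thus ?thesis using vX x_def by auto
      next
        case False
        hence "adj H x w" "w \<in> S" using w unfolding closed_nbhd_def by auto
        hence "f w \<in> verts X" "g (f w) = w" using vX gf by auto
        thus ?thesis by (metis imageI)
      qed
    qed
  qed
  define P where "P = (\<lambda>C. g ` C) ` Pn - {{}}"
  have Ppart: "partition_on (closed_nbhd H x \<inter> S) P"
    using partition_on_inj_image[OF Pn(1) ginj] unfolding P_def gX .
  have Pcl: "\<forall>C\<in>P. is_clique H C"
  proof
    fix C assume "C \<in> P"
    then obtain C' where C': "C' \<in> Pn" "C = g ` C'" unfolding P_def by blast
    have cl: "is_clique X C'" using Pn(2) C'(1) by blast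
    have sub: "C' \<subseteq> f ` S" using cl vXsub unfolding is_clique_def by blast
    show "is_clique H C"
      unfolding is_clique_def
    proof (intro conjI ballI impI)
      show "C \<subseteq> verts H" using C'(2) sub gS S(1) by blast
    next
      fix a b assume ab: "a \<in> C" "b \<in> C" "a \<noteq> b"
      then obtain a' b' where "a' \<in> C'" "b' \<in> C'" "a = g a'" "b = g b'" using C'(2) by blast
      moreover hence "a' \<noteq> b'" using ab by blast
      ultimately have "adj X a' b'" using cl unfolding is_clique_def by blast
      thus "adj H a b" unfolding X_def using \<open>a = g a'\<close> \<open>b = g b'\<close> by (simp add: aHn)
    qed
  qed
  have finPn: "finite Pn" using finite_elements[OF finX Pn(1)] .
  have "card P \<le> card ((\<lambda>C. g ` C) ` Pn)" unfolding P_def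
    using finPn by (intro card_mono) auto
  also have "\<dots> \<le> card Pn" using finPn by (rule card_image_le)
  also have "\<dots> \<le> hat_beta t G" using Pn(3) y(2) lb by simp
  finally show ?thesis using xS Ppart Pcl by blast
qed


lemma greedy:
  assumes HG: "fin_simple_graph H"
    and step: "\<And>S. S \<subseteq> verts H \<Longrightarrow> S \<noteq> {} \<Longrightarrow> \<exists>x\<in>S. \<exists>P. partition_on (closed_nbhd H x \<inter> S) P
                  \<and> (\<forall>C\<in>P. is_clique H C) \<and> card P \<le> k"
  shows "S \<subseteq> verts H \<Longrightarrow> \<exists>P I. partition_on S P \<and> (\<forall>C\<in>P. is_clique H C)
           \<and> is_indep H I \<and> I \<subseteq> S \<and> card P \<le> k * card I"
proof (induction "card S" arbitrary: S rule: less_induct)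
  case less
  have finH: "finite (verts H)" using HG by (simp add: fin_simple_graph_def)
  have finS: "finite S" using less.prems finH finite_subset by blast
  show ?case
  proof (cases "S = {}")
    case True
    have "partition_on S {}" "is_indep H {}" using True by (auto simp: partition_on_empty is_indep_def)
    thus ?thesis by fastforce
  next
    case False
    obtain x P1 where x: "x \<in> S" and P1: "partition_on (closed_nbhd H x \<inter> S) P1"
      "\<forall>C\<in>P1. is_clique H C" "card P1 \<le> k"
      using step[OF less.prems False] by blast
    define S' where "S' = S - closed_nbhd H x"
    have xN: "x \<in> closed_nbhd H x" by (simp add: closed_nbhd_def)
    have "S' \<subset> S" unfolding S'_def using x xN by blast
    hence "card S' < card S" using finS by (rule psubset_card_mono[rotated])
    moreover have "S' \<subseteq> verts H" using less.prems S'_def by blast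
    ultimately obtain P2 I2 where P2: "partition_on S' P2" "\<forall>C\<in>P2. is_clique H C"
      "is_indep H I2" "I2 \<subseteq> S'" "card P2 \<le> k * card I2"
      using less.hyps by blast
    have disj: "\<Union>P1 \<inter> \<Union>P2 = {}" using P1(1) P2(1) unfolding partition_on_def S'_def by blast
    have part: "partition_on S (P1 \<union> P2)"
      unfolding partition_on_def
    proof (intro conjI)
      show "\<Union>(P1 \<union> P2) = S" using P1(1) P2(1) unfolding partition_on_def S'_def by blast
      show "disjoint (P1 \<union> P2)" using disjoint_union P1(1) P2(1) disj
        unfolding partition_on_def by blast
      show "{} \<notin> P1 \<union> P2" using P1(1) P2(1) unfolding partition_on_def by blast
    qed
    have cl: "\<forall>C\<in>P1 \<union> P2. is_clique H C" using P1(2) P2(2) by blast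
    have xI2: "x \<notin> I2" using P2(4) xN S'_def by blast
    have finI2: "finite I2" using P2(4) finS S'_def finite_subset by blast
    have xV: "x \<in> verts H" using x less.prems by blast
    have sym: "\<And>u v. adj H u v \<Longrightarrow> adj H v u" and irr: "\<And>u. \<not> adj H u u"
      using HG unfolding fin_simple_graph_def by blast+
    have nadj: "\<And>y. y \<in> I2 \<Longrightarrow> \<not> adj H x y"
    proof
      fix y assume y: "y \<in> I2" "adj H x y"
      hence "y \<in> verts H" using P2(3) unfolding is_indep_def by blast
      hence "y \<in> closed_nbhd H x" using y(2) unfolding closed_nbhd_def by blast
      thus False using y(1) P2(4) S'_def by blast
    qed
    have ind: "is_indep H (insert x I2)"
      unfolding is_indep_def
    proof (intro conjI ballI)
      show "insert x I2 \<subseteq> verts H" using xV P2(3) unfolding is_indep_def by blast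
      fix u v assume uv: "u \<in> insert x I2" "v \<in> insert x I2"
      show "\<not> adj H u v"
        using uv nadj sym irr P2(3) unfolding is_indep_def by blast
    qed
    have IS: "insert x I2 \<subseteq> S" using x P2(4) S'_def by blast
    have "card (P1 \<union> P2) \<le> card P1 + card P2" by (rule card_Un_le)
    also have "\<dots> \<le> k + k * card I2" using P1(3) P2(5) by linarith
    also have "\<dots> = k * card (insert x I2)" using finI2 xI2 by simp
    finally show ?thesis using part cl ind IS by blast
  qed
qed

theorem theorem2p3:
  fixes G :: "'a graph" and H :: "'b graph" and t :: nat
  assumes "fin_simple_graph G"
    and "shallow_minor t G H"
    and "verts H \<noteq> {}"
  shows "real (clique_cover_number H) / real (indep_number H) \<le> real (hat_beta t G)"
proof -
  let ?k = "hat_beta t G"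
  have HG: "fin_simple_graph H" using assms(2) by (simp add: shallow_minor_def)
  have finH: "finite (verts H)" using HG by (simp add: fin_simple_graph_def)
  obtain P I where PI: "partition_on (verts H) P" "\<forall>C\<in>P. is_clique H C"
    "is_indep H I" "I \<subseteq> verts H" "card P \<le> ?k * card I"
    using greedy[OF HG local_step[OF assms(1,2)], of "verts H"] by blast
  have ccn: "clique_cover_number H \<le> card P" using ccn_basic(2)[OF finH PI(1,2)] .
  let ?Q = "{card I | I. is_indep H I}"
  have finQ: "finite ?Q"
  proof (rule finite_subset)
    show "?Q \<subseteq> card ` Pow (verts H)" unfolding is_indep_def by blast
    show "finite (card ` Pow (verts H))" using finH by simp
  qed
  have IQ: "card I \<le> indep_number H" unfolding indep_number_def
    by (rule Max_ge[OF finQ]) (use PI(3) in blast)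
  obtain v where v: "v \<in> verts H" using assms(3) by blast
  have "is_indep H {v}" using v HG unfolding is_indep_def fin_simple_graph_def by blast
  hence "1 \<le> indep_number H" unfolding indep_number_def
    by (intro Max_ge[OF finQ, THEN order_trans[rotated]]) force+
  hence pos: "real (indep_number H) > 0" by simp
  have "clique_cover_number H \<le> ?k * indep_number H"
    using ccn PI(5) IQ by (meson le_trans mult_le_mono2)
  hence "real (clique_cover_number H) \<le> real ?k * real (indep_number H)"
    by (metis of_nat_le_iff of_nat_mult)
  thus ?thesis using pos by (simp add: divide_le_eq)
qed

end
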